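(* Let $m_1\le m_2\le\dots\le m_k$ be nonnegative integers, $n=\sum_r m_r$, and $T_1,\dots,T_n\in\{H,L\}$ with $0\le H<L$. Let $q^{(t)}_r$ be the capacity variables computed by Algorithm 1 on this input, with $q^{(t)}_0:=0$. For a look-ahead setup $(r,h)$ with $1\le r\le h\le k$ and a task index $t$, define $Z^{(r,h,t)}_L=\sum_{i=1}^{h-1}\min\{q^{(t)}_i,q^{(t)}_{r-1}\}$ and $Z^{(r,h,t)}_H=\sum_{i=r}^{h}(q^{(t)}_i-q^{(t)}_{r-1})$ (the L-zone and H-zone sizes when the algorithm allocates task $t$ under setup $(r,h)$). Then for all $1\le i<j\le n$, $$Z^{(r,h,i)}_H+Z^{(r,h,i)}_L+i-1\;\le\;Z^{(r,h,j)}_H+Z^{(r,h,j)}_L+j-1.$$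
   Context: Algorithm 1 (simulation-based threshold algorithm). Input: integers $0\le m_1\le\dots\le m_k$ and a sequence $T_1,\dots,T_n$ with $n=\sum_r m_r$. Set $q^{(1)}_r=m_r$ for all $r$. For $t=1,\dots,n$: set $x_t=\mathrm{TA}(q^{(t)}_1,\dots,q^{(t)}_k;\,T_t,T_{t+1},\dots,T_n)$ and $q^{(t+1)}_r=q^{(t)}_r-\mathbf{1}(x_t=r)$ for each $r$. Output $\mathbf{x}=(x_1,\dots,x_n)$. Subroutine $\mathrm{TA}(m_1,\dots,m_k;\,S_1,\dots,S_N)$ (ThresholdAllocation), with the convention $m_0:=0$: for $\gamma=k,k-1,\dots,1$: if $m_\gamma=m_{\gamma-1}$, go to the next $\gamma$; otherwise, for $h=\gamma,\gamma+1,\dots,k$: let $Z_L=\sum_{i=1}^{h-1}\min\{m_i,m_{\gamma-1}\}$ and $Z_H=\sum_{i=\gamma}^{h}(m_i-m_{\gamma-1})$; if $|\{i\in\{1,\dots,Z_L+Z_H\}: S_i>S_1\}|\ge Z_L$, return $\gamma$ (agent to which $S_1$ is assigned). *)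

theory Defs
  imports Complex_Main
begin

text \<open>Capacities are functions nat => nat indexed by agents 1..k; the convention
  m_0 := 0 is enforced by capz.\<close>

definition capz :: "(nat \<Rightarrow> nat) \<Rightarrow> nat \<Rightarrow> int" where
  "capz m i = (if i = 0 then 0 else int (m i))"

definition zoneL :: "(nat \<Rightarrow> nat) \<Rightarrow> nat \<Rightarrow> nat \<Rightarrow> int" where
  "zoneL m g h = (\<Sum>i\<in>{1..<h}. min (capz m i) (capz m (g - 1)))"

definition zoneH :: "(nat \<Rightarrow> nat) \<Rightarrow> nat \<Rightarrow> nat \<Rightarrow> int" where
  "zoneH m g h = (\<Sum>i\<in>{g..h}. capz m i - capz m (g - 1))"

text \<open>Test inside ThresholdAllocation; the sequence S is indexed from 1 (S 1 is the current task).\<close>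
definition ta_cond :: "(nat \<Rightarrow> nat) \<Rightarrow> (nat \<Rightarrow> real) \<Rightarrow> nat \<Rightarrow> nat \<Rightarrow> bool" where
  "ta_cond m S g h =
     (int (card {i \<in> {1..nat (zoneL m g h + zoneH m g h)}. S i > S 1}) \<ge> zoneL m g h)"

definition TA :: "nat \<Rightarrow> (nat \<Rightarrow> nat) \<Rightarrow> (nat \<Rightarrow> real) \<Rightarrow> nat" where
  "TA k m S = (case find (\<lambda>g. capz m g \<noteq> capz m (g - 1) \<and> (\<exists>h\<in>{g..k}. ta_cond m S g h))
                          (rev [1..<Suc k]) of Some g \<Rightarrow> g | None \<Rightarrow> 0)"

text \<open>Algorithm 1: alg_q k m T s is the capacity vector q^(s+1); alg_x k m T t is x_t.\<close>
primrec alg_q :: "nat \<Rightarrow> (nat \<Rightarrow> nat) \<Rightarrow> (nat \<Rightarrow> real) \<Rightarrow> nat \<Rightarrow> (nat \<Rightarrow> nat)" where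
  "alg_q k m T 0 = m"
| "alg_q k m T (Suc s) =
     (let q = alg_q k m T s; x = TA k q (\<lambda>i. T (Suc s + i - 1))
      in (\<lambda>r. q r - (if x = r then 1 else 0)))"

definition qcap :: "nat \<Rightarrow> (nat \<Rightarrow> nat) \<Rightarrow> (nat \<Rightarrow> real) \<Rightarrow> nat \<Rightarrow> nat \<Rightarrow> nat" where
  "qcap k m T t = alg_q k m T (t - 1)"

definition alg_x :: "nat \<Rightarrow> (nat \<Rightarrow> nat) \<Rightarrow> (nat \<Rightarrow> real) \<Rightarrow> nat \<Rightarrow> nat" where
  "alg_x k m T t = TA k (qcap k m T t) (\<lambda>i. T (t + i - 1))"

end

theory Submission
  imports Defs
begin

lemma sum_ge_neg_delta:
  fixes f :: "nat \<Rightarrow> int"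
  assumes "finite A" "\<And>i. i \<in> A \<Longrightarrow> f i \<ge> -(if i = x then 1 else 0)"
  shows "sum f A \<ge> -1"
proof -
  have "sum f A \<ge> (\<Sum>i\<in>A. -(if i = x then 1 else 0))"
    by (rule sum_mono) (use assms in auto)
  also have "(\<Sum>i\<in>A. -(if i = x then 1 else 0)) = -(if x \<in> A then 1 else (0::int))"
    using assms(1) by (simp add: sum_negf)
  finally show ?thesis by (auto split: if_splits)
qed

lemma capz_nonneg: "capz q i \<ge> 0" by (simp add: capz_def)

lemma step:
  fixes q :: "nat \<Rightarrow> nat"
  assumes mono: "\<And>a b. a \<le> b \<Longrightarrow> b \<le> k \<Longrightarrow> capz q a \<le> capz q b"
    and x: "1 \<le> x" "x \<le> k" "capz q x \<noteq> capz q (x-1)"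
    and rh: "1 \<le> r" "r \<le> h" "h \<le> k"
  shows "zoneH q r h + zoneL q r h - 1
     \<le> zoneH (\<lambda>i. q i - (if x = i then 1 else 0)) r h + zoneL (\<lambda>i. q i - (if x = i then 1 else 0)) r h"
proof -
  define q' where "q' = (\<lambda>i. q i - (if x = i then 1 else 0))"
  define cz where "cz = capz q"
  define cz' where "cz' = capz q'"
  have mono': "\<And>a b. a \<le> b \<Longrightarrow> b \<le> k \<Longrightarrow> cz a \<le> cz b" using mono cz_def by auto
  have czg: "cz x > cz (x-1)" using mono'[of "x-1" x] x cz_def by force
  have qx: "q x \<ge> 1" using czg capz_nonneg[of q "x-1"] x(1) unfolding cz_def capz_def by auto
  have cz': "\<And>i. cz' i = cz i - (if i = x then 1 else 0)"
    using qx x(1) unfolding cz'_def cz_def q'_def capz_def by auto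
  define c where "c = cz (r-1)"
  define c' where "c' = cz' (r-1)"
  have L: "zoneL q' r h - zoneL q r h = (\<Sum>i\<in>{1..<h}. min (cz' i) c' - min (cz i) c)"
    unfolding zoneL_def cz_def cz'_def c_def c'_def by (simp add: sum_subtractf)
  have H: "zoneH q' r h - zoneH q r h = (\<Sum>i\<in>{r..h}. (cz' i - c') - (cz i - c))"
    unfolding zoneH_def cz_def cz'_def c_def c'_def by (simp add: sum_subtractf)
  have "(\<Sum>i\<in>{1..<h}. min (cz' i) c' - min (cz i) c) + (\<Sum>i\<in>{r..h}. (cz' i - c') - (cz i - c)) \<ge> -1"
  proof (cases "h < x")
    case True
    have "r - 1 \<noteq> x" using True rh by auto
    then have cc: "c' = c" unfolding c_def c'_def using cz' by simp
    have "(\<Sum>i\<in>{1..<h}. min (cz' i) c' - min (cz i) c) = 0"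
      by (rule sum.neutral) (use True cz' cc in auto)
    moreover have "(\<Sum>i\<in>{r..h}. (cz' i - c') - (cz i - c)) = 0"
      by (rule sum.neutral) (use True cz' cc in auto)
    ultimately show ?thesis by simp
  next
    case False
    show ?thesis
    proof (cases "x = r - 1")
      case xr: True
      have r2: "r \<ge> 2" using xr x(1) by auto
      have cc: "c' = c - 1" unfolding c_def c'_def using cz' xr by simp
      have cpos: "c = cz x" using xr c_def by simp
      have Hs: "(\<Sum>i\<in>{r..h}. (cz' i - c') - (cz i - c)) = int (h + 1 - r)"
      proof -
        have "(\<Sum>i\<in>{r..h}. (cz' i - c') - (cz i - c)) = (\<Sum>i\<in>{r..h}. 1)"
          by (rule sum.cong) (use cz' cc xr r2 in auto)
        then show ?thesis using rh by simp
      qed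
      have split: "(\<Sum>i\<in>{1..<h}. min (cz' i) c' - min (cz i) c)
          = (\<Sum>i\<in>{1..<r-1}. min (cz' i) c' - min (cz i) c) + (\<Sum>i\<in>{r-1..<h}. min (cz' i) c' - min (cz i) c)"
        using r2 rh by (simp add: sum.atLeastLessThan_concat)
      have s1: "(\<Sum>i\<in>{1..<r-1}. min (cz' i) c' - min (cz i) c) = 0"
      proof (rule sum.neutral, intro ballI)
        fix i assume i: "i \<in> {1..<r-1}"
        have "cz i \<le> cz (x-1)" using mono'[of i "x-1"] i xr x by auto
        then have "cz i \<le> c - 1" using czg cpos by simp
        then show "min (cz' i) c' - min (cz i) c = 0" using cz' cc i xr by auto
      qed
      have s2: "(\<Sum>i\<in>{r-1..<h}. min (cz' i) c' - min (cz i) c) \<ge> (\<Sum>i\<in>{r-1..<h}. -1)"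
        by (rule sum_mono) (use cz' cc in auto)
      have "(\<Sum>i\<in>{r-1..<h}. (-1::int)) = - int (h + 1 - r)" using r2 rh by simp
      then show ?thesis using Hs split s1 s2 by linarith
    next
      case xr: False
      have cc: "c' = c" unfolding c_def c'_def using cz' xr by simp
      show ?thesis
      proof (cases "x < r")
        case True
        have "(\<Sum>i\<in>{r..h}. (cz' i - c') - (cz i - c)) = 0"
          by (rule sum.neutral) (use True cz' cc in auto)
        moreover have "(\<Sum>i\<in>{1..<h}. min (cz' i) c' - min (cz i) c) \<ge> -1"
          by (rule sum_ge_neg_delta[where x=x]) (use cz' cc in auto)
        ultimately show ?thesis by simp
      next
        case xge: False
        have "cz (r-1) \<le> cz (x-1)" using mono'[of "r-1" "x-1"] xge x by auto
        then have cx: "cz x > c" using czg c_def by simp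
        have "(\<Sum>i\<in>{1..<h}. min (cz' i) c' - min (cz i) c) = 0"
          by (rule sum.neutral) (use cx cz' cc in auto)
        moreover have "(\<Sum>i\<in>{r..h}. (cz' i - c') - (cz i - c)) \<ge> -1"
          by (rule sum_ge_neg_delta[where x=x]) (use cz' cc in auto)
        ultimately show ?thesis by simp
      qed
    qed
  qed
  then show ?thesis using L H unfolding q'_def by linarith
qed


lemma find_Some_mem: "find P xs = Some y \<Longrightarrow> y \<in> set xs \<and> P y"
  by (induction xs) (auto split: if_splits)

lemma TA_cases:
  "TA k m S = 0 \<or> (1 \<le> TA k m S \<and> TA k m S \<le> k \<and> capz m (TA k m S) \<noteq> capz m (TA k m S - 1))"
proof (cases "find (\<lambda>g. capz m g \<noteq> capz m (g - 1) \<and> (\<exists>h\<in>{g..k}. ta_cond m S g h)) (rev [1..<Suc k])")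
  case None
  then show ?thesis by (simp add: TA_def)
next
  case (Some g)
  then have "g \<in> set (rev [1..<Suc k]) \<and> capz m g \<noteq> capz m (g - 1)"
    by (auto dest!: find_Some_mem)
  moreover have "TA k m S = g" unfolding TA_def Some by simp
  ultimately show ?thesis by auto
qed

lemma zone_capz_eq:
  assumes "capz q' = capz q"
  shows "zoneH q' r h = zoneH q r h" "zoneL q' r h = zoneL q r h"
  unfolding zoneH_def zoneL_def using assms by simp_all

lemma mono_inv:
  assumes sorted: "\<And>a. 1 \<le> a \<Longrightarrow> a < k \<Longrightarrow> m a \<le> m (Suc a)"
  shows "\<And>a b. a \<le> b \<Longrightarrow> b \<le> k \<Longrightarrow> capz (alg_q k m T s) a \<le> capz (alg_q k m T s) b"
proof (induction s)
  case 0
  from 0(1,2) show ?case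
  proof (induction b rule: dec_induct)
    case base then show ?case by simp
  next
    case (step b)
    have "capz m b \<le> capz m (Suc b)"
      using sorted[of b] step by (cases "b = 0") (auto simp: capz_def)
    then show ?case using step by simp
  qed
next
  case (Suc s)
  define q where "q = alg_q k m T s"
  define x where "x = TA k q (\<lambda>i. T (Suc s + i - 1))"
  have eq: "alg_q k m T (Suc s) = (\<lambda>i. q i - (if x = i then 1 else 0))"
    by (simp add: q_def x_def Let_def)
  have IH: "\<And>a b. a \<le> b \<Longrightarrow> b \<le> k \<Longrightarrow> capz q a \<le> capz q b" using Suc.IH q_def by simp
  have "x = 0 \<or> (1 \<le> x \<and> x \<le> k \<and> capz q x \<noteq> capz q (x - 1))"
    unfolding x_def by (rule TA_cases)
  then consider "x = 0" | "1 \<le> x" "x \<le> k" "capz q x \<noteq> capz q (x - 1)" by blast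
  then show ?case
  proof cases
    case 1
    have "capz (\<lambda>i. q i - (if x = i then 1 else 0)) = capz q" using 1 by (auto simp: capz_def)
    then show ?thesis unfolding eq using IH[OF Suc.prems] by simp
  next
    case 2
    have czg: "capz q x > capz q (x-1)" using IH[of "x-1" x] 2 by force
    have qx: "q x \<ge> 1" using czg capz_nonneg[of q "x-1"] 2 unfolding capz_def by auto
    have cz': "\<And>i. capz (\<lambda>i. q i - (if x = i then 1 else 0)) i = capz q i - (if i = x then 1 else 0)"
      using qx 2 unfolding capz_def by auto
    show ?thesis unfolding eq cz'
    proof -
      have "capz q a \<le> capz q b" using IH Suc.prems by simp
      moreover have "b = x \<Longrightarrow> a < x \<Longrightarrow> capz q a \<le> capz q (x-1)" using IH[of a "x-1"] Suc.prems by auto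
      ultimately show "capz q a - (if a = x then 1 else 0) \<le> capz q b - (if b = x then 1 else 0)"
        using czg Suc.prems by (cases "b = x"; cases "a = x") auto
    qed
  qed
qed

theorem lemma4:
  fixes k n :: nat and m :: "nat \<Rightarrow> nat" and T :: "nat \<Rightarrow> real" and H L :: real
    and r h i j :: nat
  assumes sorted: "\<And>a. 1 \<le> a \<Longrightarrow> a < k \<Longrightarrow> m a \<le> m (Suc a)"
    and n_def: "n = (\<Sum>a\<in>{1..k}. m a)"
    and HL: "0 \<le> H" "H < L"
    and T_vals: "\<And>t. 1 \<le> t \<Longrightarrow> t \<le> n \<Longrightarrow> T t \<in> {H, L}"
    and rh: "1 \<le> r" "r \<le> h" "h \<le> k"
    and ij: "1 \<le> i" "i < j" "j \<le> n"
  shows "zoneH (qcap k m T i) r h + zoneL (qcap k m T i) r h + int i - 1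
         \<le> zoneH (qcap k m T j) r h + zoneL (qcap k m T j) r h + int j - 1"
proof -
  define G where "G s = zoneH (alg_q k m T s) r h + zoneL (alg_q k m T s) r h + int s" for s
  have G_step: "G s \<le> G (Suc s)" for s
  proof -
    define q where "q = alg_q k m T s"
    define x where "x = TA k q (\<lambda>i. T (Suc s + i - 1))"
    have eq: "alg_q k m T (Suc s) = (\<lambda>i. q i - (if x = i then 1 else 0))"
      by (simp add: q_def x_def Let_def)
    have IH: "\<And>a b. a \<le> b \<Longrightarrow> b \<le> k \<Longrightarrow> capz q a \<le> capz q b"
      using mono_inv[of k m, OF sorted] q_def by blast
    have "x = 0 \<or> (1 \<le> x \<and> x \<le> k \<and> capz q x \<noteq> capz q (x - 1))"
      unfolding x_def by (rule TA_cases)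
    then consider "x = 0" | "1 \<le> x" "x \<le> k" "capz q x \<noteq> capz q (x - 1)" by blast
    then show ?thesis
    proof cases
      case 1
      have "capz (alg_q k m T (Suc s)) = capz q" unfolding eq using 1 by (auto simp: capz_def)
      then show ?thesis unfolding G_def using zone_capz_eq[of "alg_q k m T (Suc s)" q] q_def by simp
    next
      case 2
      have "G (Suc s) = zoneH (\<lambda>i. q i - (if x = i then 1 else 0)) r h + zoneL (\<lambda>i. q i - (if x = i then 1 else 0)) r h + int (Suc s)"
        unfolding G_def eq by simp
      moreover have "G s = zoneH q r h + zoneL q r h + int s" unfolding G_def q_def by simp
      ultimately show ?thesis using step[OF IH 2 rh] by simp
    qed
  qed
  have "G (i - 1) \<le> G (j - 1)"
    by (rule lift_Suc_mono_le[of G]) (use G_step ij in auto)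
  then show ?thesis using ij unfolding G_def qcap_def by simp
qed

end
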